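(* Let $n\ge 3$ and $u,v,w>0$. Let $A\in\mathbb{R}^{n\times n}$ be the Toeplitz matrix with $A_{ii}=w$ for all $i$, $A_{i,i+1}=u$ and $A_{i+1,i}=v$ for $i=1,\dots,n-1$, $A_{1n}=u$, $A_{n1}=v$, and all other entries $0$; that is, $$A=\begin{pmatrix} w & u & 0 & \cdots & 0 & u\\ v & w & u & \cdots & 0 & 0\\ 0 & v & w & \ddots & & \vdots\\ \vdots & & \ddots & \ddots & \ddots & 0\\ 0 & & & v & w & u\\ v & 0 & \cdots & 0 & v & w\end{pmatrix}.$$ Then $r(t):=r\big((1-t)A+tA^{\top}\big)$ is concave in $t$ for $t\in(0,1)$, strictly concave if $u\ne v$.
   Context: $r(M)$ denotes the spectral radius of a square matrix $M$. *)

theory Defs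
  imports "HOL-Analysis.Convex" "Jordan_Normal_Form.Spectral_Radius"
begin

definition toep_mat :: "nat \<Rightarrow> real \<Rightarrow> real \<Rightarrow> real \<Rightarrow> real mat" where
  "toep_mat n u v w = mat n n (\<lambda>(i,j).
     if i = j then w
     else if j = i + 1 then u
     else if i = j + 1 then v
     else if i = 0 \<and> j = n - 1 then u
     else if i = n - 1 \<and> j = 0 then v
     else 0)"

definition real_spectral_radius :: "real mat \<Rightarrow> real" where
  "real_spectral_radius M = spectral_radius (map_mat complex_of_real M)"

definition strictly_concave_on :: "real set \<Rightarrow> (real \<Rightarrow> real) \<Rightarrow> bool" where
  "strictly_concave_on S f \<longleftrightarrow> convex S \<and>
    (\<forall>x\<in>S. \<forall>y\<in>S. \<forall>a. x \<noteq> y \<and> 0 < a \<and> a < 1 \<longrightarrow>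
       f (a * x + (1 - a) * y) > a * f x + (1 - a) * f y)"

end

theory Submission imports Defs begin

lemma pos_comb:
  fixes t u v :: real
  assumes "0 \<le> t" "t \<le> 1" "u > 0" "v > 0"
  shows "(1 - t) * u + t * v > 0"
proof (cases "t < 1")
  case True
  hence "(1 - t) * u > 0" using assms by simp
  moreover have "t * v \<ge> 0" using assms by simp
  ultimately show ?thesis by linarith
next
  case False
  hence "t = 1" using assms by simp
  thus ?thesis using assms by simp
qed
lemma young_strict:
  fixes x y al :: real
  assumes "0 < al" "al < 1" "x > 0" "y > 0" "x \<noteq> y"
  shows "x powr al * y powr (1 - al) < al * x + (1 - al) * y"
proof -
  define s where "s = al * x + (1 - al) * y"
  have s: "s > 0" using assms pos_comb[of "1 - al" x y] unfolding s_def by simp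
  have "s - x = (1 - al) * (y - x)" unfolding s_def by (simp add: algebra_simps)
  hence "x \<noteq> s" using assms by auto
  hence 1: "ln x - ln s < (x - s) / s" using ln_diff_less s assms by auto
  have "s - y = al * (x - y)" unfolding s_def by (simp add: algebra_simps)
  hence "y \<noteq> s" using assms by auto
  hence 2: "ln y - ln s < (y - s) / s" using ln_diff_less s assms by auto
  have "al * (ln x - ln s) + (1 - al) * (ln y - ln s) < al * ((x - s) / s) + (1 - al) * ((y - s) / s)"
    using 1 2 assms by (intro add_strict_mono mult_strict_left_mono) auto
  also have "\<dots> = 0" using s unfolding s_def by (simp add: field_simps)
  finally have "al * ln x + (1 - al) * ln y < ln s" by (simp add: algebra_simps)
  hence "exp (al * ln x + (1 - al) * ln y) < s" using s
    by (metis exp_less_cancel_iff exp_ln)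
  thus ?thesis using assms by (simp add: powr_def exp_add s_def)
qed

definition G :: "real \<Rightarrow> real \<Rightarrow> real \<Rightarrow> real" where
  "G al a b = a powr al * b powr (1 - al)"

lemma holder2:
  fixes al l a1 b1 a2 b2 :: real
  assumes al: "0 < al" "al < 1" and l: "0 < l" "l < 1"
    and pos: "a1 > 0" "b1 > 0" "a2 > 0" "b2 > 0"
  shows "l * G al a1 b1 + (1 - l) * G al a2 b2 \<le> G al (l * a1 + (1 - l) * a2) (l * b1 + (1 - l) * b2)"
    and "a1 * b2 \<noteq> a2 * b1 \<Longrightarrow>
      l * G al a1 b1 + (1 - l) * G al a2 b2 < G al (l * a1 + (1 - l) * a2) (l * b1 + (1 - l) * b2)"
proof -
  define A where "A = l * a1 + (1 - l) * a2"
  define B where "B = l * b1 + (1 - l) * b2"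
  have A: "A > 0" unfolding A_def using l pos pos_comb[of "1 - l" a1 a2] by simp
  have B: "B > 0" unfolding B_def using l pos pos_comb[of "1 - l" b1 b2] by simp
  have GA: "G al A B > 0" unfolding G_def using A B by simp
  have split: "G al a b = G al A B * G al (a / A) (b / B)" if "a > 0" "b > 0" for a b
    using that A B by (simp add: G_def powr_divide field_simps)
  have Y: "G al (a / A) (b / B) \<le> al * (a / A) + (1 - al) * (b / B)" if "a > 0" "b > 0" for a b
    unfolding G_def using Youngs_inequality_0[of al "1 - al" "a/A" "b/B"] that al A B by auto
  have Ys: "G al (a / A) (b / B) < al * (a / A) + (1 - al) * (b / B)" if "a > 0" "b > 0" "a / A \<noteq> b / B" for a b
    unfolding G_def using young_strict[of al "a/A" "b/B"] that al A B by auto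
  have sum1: "l * (al * (a1 / A) + (1 - al) * (b1 / B)) + (1 - l) * (al * (a2 / A) + (1 - al) * (b2 / B)) = 1"
  proof -
    have "l * (al * (a1 / A) + (1 - al) * (b1 / B)) + (1 - l) * (al * (a2 / A) + (1 - al) * (b2 / B))
       = al * ((l * a1 + (1 - l) * a2) / A) + (1 - al) * ((l * b1 + (1 - l) * b2) / B)"
      using A B by (simp add: field_simps)
    also have "\<dots> = 1" using A B unfolding A_def[symmetric] B_def[symmetric] by simp
    finally show ?thesis .
  qed
  have eq: "l * G al a1 b1 + (1 - l) * G al a2 b2 =
     G al A B * (l * G al (a1 / A) (b1 / B) + (1 - l) * G al (a2 / A) (b2 / B))"
    using split pos by (simp add: algebra_simps)
  have "l * G al (a1 / A) (b1 / B) + (1 - l) * G al (a2 / A) (b2 / B) \<le> l * (al * (a1 / A) + (1 - al) * (b1 / B)) + (1 - l) * (al * (a2 / A) + (1 - al) * (b2 / B))"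
    using Y pos l
    by (intro add_mono mult_left_mono) auto
  hence "l * G al (a1 / A) (b1 / B) + (1 - l) * G al (a2 / A) (b2 / B) \<le> 1" using sum1 by linarith
  thus "l * G al a1 b1 + (1 - l) * G al a2 b2 \<le> G al (l * a1 + (1 - l) * a2) (l * b1 + (1 - l) * b2)"
    unfolding eq A_def[symmetric] B_def[symmetric] using GA
    by (metis mult.right_neutral mult_left_mono order_less_imp_le)
  assume ne: "a1 * b2 \<noteq> a2 * b1"
  have "a1 / A \<noteq> b1 / B"
  proof
    assume "a1 / A = b1 / B"
    hence "a1 * B = b1 * A" using A B by (simp add: field_simps)
    hence "(1 - l) * (a1 * b2) = (1 - l) * (a2 * b1)" unfolding A_def B_def by (simp add: algebra_simps)
    thus False using ne l by simp
  qed
  hence "l * G al (a1 / A) (b1 / B) + (1 - l) * G al (a2 / A) (b2 / B) < l * (al * (a1 / A) + (1 - al) * (b1 / B)) + (1 - l) * (al * (a2 / A) + (1 - al) * (b2 / B))"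
    using Y Ys pos l
    by (intro add_less_le_mono mult_strict_left_mono mult_left_mono) auto
  hence "l * G al (a1 / A) (b1 / B) + (1 - l) * G al (a2 / A) (b2 / B) < 1" using sum1 by linarith
  thus "l * G al a1 b1 + (1 - l) * G al a2 b2 < G al (l * a1 + (1 - l) * a2) (l * b1 + (1 - l) * b2)"
    unfolding eq A_def[symmetric] B_def[symmetric] using GA
    by (metis mult.right_neutral mult_strict_left_mono)
qed

lemma perron_eig:
  fixes B :: "real mat" and x :: "real vec" and n :: nat and \<rho> :: real
  assumes B: "B \<in> carrier_mat n n" and n: "n > 0"
   and nonneg: "\<And>i j. i < n \<Longrightarrow> j < n \<Longrightarrow> B $$ (i,j) \<ge> 0"
   and x: "x \<in> carrier_vec n" and xpos: "\<And>i. i < n \<Longrightarrow> x $ i > 0"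
   and ev: "B *\<^sub>v x = \<rho> \<cdot>\<^sub>v x"
  shows "real_spectral_radius B = \<rho>"
proof -
  define C where "C = map_mat complex_of_real B"
  have C: "C \<in> carrier_mat n n" using B unfolding C_def by simp
  have rowk: "(B *\<^sub>v x) $ i = (\<Sum>j<n. B $$ (i,j) * x $ j)" if "i < n" for i
    using that B x by (simp add: scalar_prod_def lessThan_atLeast0 row_def)
  have "\<rho> * x $ 0 = (B *\<^sub>v x) $ 0" using ev x n by simp
  also have "\<dots> \<ge> 0" unfolding rowk[OF n] using nonneg n xpos
    by (intro sum_nonneg) (simp add: less_imp_le)
  finally have rho: "\<rho> \<ge> 0" using xpos[OF n]
    by (simp add: zero_le_mult_iff)
  have "eigenvector B x \<rho>"
  proof -
    have "x \<noteq> 0\<^sub>v n" using xpos[OF n] n by auto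
    thus ?thesis unfolding eigenvector_def using B x ev by auto
  qed
  hence "eigenvalue B \<rho>" unfolding eigenvalue_def by auto
  hence "eigenvalue C (complex_of_real \<rho>)" unfolding C_def
    using of_real_hom.eigenvalue_hom[OF B] by auto
  hence "norm (complex_of_real \<rho>) \<le> spectral_radius C"
    using spectral_radius_mem_max(2)[OF C n] unfolding spectrum_def by (metis imageI mem_Collect_eq)
  hence ge: "\<rho> \<le> spectral_radius C" using rho by simp
  obtain lam where lam: "lam \<in> spectrum C" and sr: "spectral_radius C = norm lam"
    using spectral_radius_mem_max(1)[OF C n] by auto
  from lam obtain y where y: "y \<in> carrier_vec n" "y \<noteq> 0\<^sub>v n" "C *\<^sub>v y = lam \<cdot>\<^sub>v y"
    unfolding spectrum_def eigenvalue_def eigenvector_def using C by auto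
  define f where "f i = norm (y $ i) / x $ i" for i
  define m where "m = Max (f ` {..<n})"
  obtain k where k: "k < n" "f k = m"
  proof -
    have "m \<in> f ` {..<n}" unfolding m_def using n by (intro Max_in) auto
    thus ?thesis using that by auto
  qed
  have fle: "f i \<le> m" if "i < n" for i unfolding m_def using that by simp
  obtain i0 where i0: "i0 < n" "y $ i0 \<noteq> 0" using y(1,2) by (metis eq_vecI carrier_vecD index_zero_vec)
  have "0 < f i0" unfolding f_def using i0 xpos by simp
  hence m: "m > 0" using fle[OF i0(1)] by simp
  have ynorm: "norm (y $ j) \<le> m * x $ j" if "j < n" for j
    using fle[OF that] xpos[OF that] unfolding f_def by (simp add: divide_le_eq)
  have yk: "norm (y $ k) = m * x $ k" using k xpos[OF k(1)] unfolding f_def by (simp add: divide_eq_eq)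
  have "norm lam * norm (y $ k) = norm ((C *\<^sub>v y) $ k)" using y(3) k y(1) by (simp add: norm_mult)
  also have "(C *\<^sub>v y) $ k = (\<Sum>j<n. complex_of_real (B $$ (k,j)) * y $ j)"
    using k C y(1) B unfolding C_def by (simp add: scalar_prod_def lessThan_atLeast0 row_def)
  also have "norm \<dots> \<le> (\<Sum>j<n. norm (complex_of_real (B $$ (k,j)) * y $ j))"
    by (rule norm_sum)
  also have "\<dots> \<le> (\<Sum>j<n. B $$ (k,j) * (m * x $ j))"
    using nonneg k ynorm by (intro sum_mono) (simp add: norm_mult mult_left_mono)
  also have "\<dots> = m * (B *\<^sub>v x) $ k" using rowk[OF k(1)] by (simp add: sum_distrib_left algebra_simps)
  also have "\<dots> = \<rho> * norm (y $ k)" using ev x k yk by simp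
  finally have "norm lam * norm (y $ k) \<le> \<rho> * norm (y $ k)" .
  moreover have "norm (y $ k) > 0" using yk m xpos[OF k(1)] by simp
  ultimately have "norm lam \<le> \<rho>" by simp
  thus ?thesis using ge sr unfolding real_spectral_radius_def C_def by simp
qed

lemma entries:
  fixes n :: nat and u v w t :: real
  assumes n: "n \<ge> 3" and i: "i < n" and j: "j < n"
  defines "A \<equiv> toep_mat n u v w"
  shows "((1 - t) \<cdot>\<^sub>m A + t \<cdot>\<^sub>m transpose_mat A) $$ (i,j) =
     (if j = i then w else 0) + (if j = i + 1 then (1-t)*u + t*v else 0)
     + (if j = n - 1 then (if i = 0 then (1-t)*u + t*v else 0) else 0)
     + (if j = i - 1 then (if i \<ge> 1 then (1-t)*v + t*u else 0) else 0)
     + (if j = 0 then (if i = n - 1 then (1-t)*v + t*u else 0) else 0)"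
proof -
  define T where "T i j = (if i = j then w
     else if j = i + 1 then u
     else if i = j + 1 then v
     else if i = 0 \<and> j = n - 1 then u
     else if i = n - 1 \<and> j = 0 then v
     else 0)" for i j
  have AT: "A $$ (i', j') = T i' j'" if "i' < n" "j' < n" for i' j'
    unfolding A_def toep_mat_def T_def using that by simp
  have Ac: "A \<in> carrier_mat n n" unfolding A_def toep_mat_def by simp
  have "((1 - t) \<cdot>\<^sub>m A + t \<cdot>\<^sub>m transpose_mat A) $$ (i,j) = (1 - t) * T i j + t * T j i"
    using Ac i j AT by simp
  also have "\<dots> = (if j = i then w else 0) + (if j = i + 1 then (1-t)*u + t*v else 0)
     + (if j = n - 1 then (if i = 0 then (1-t)*u + t*v else 0) else 0)
     + (if j = i - 1 then (if i \<ge> 1 then (1-t)*v + t*u else 0) else 0)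
     + (if j = 0 then (if i = n - 1 then (1-t)*v + t*u else 0) else 0)"
  proof -
    consider "j = i" | "j = i + 1" | "i = j + 1" | "i = 0 \<and> j = n - 1" | "i = n - 1 \<and> j = 0"
      | "j \<noteq> i \<and> j \<noteq> i + 1 \<and> i \<noteq> j + 1 \<and> \<not> (i = 0 \<and> j = n - 1) \<and> \<not> (i = n - 1 \<and> j = 0)"
      by blast
    thus ?thesis
    proof cases
      case 1 thus ?thesis using n i j unfolding T_def by (auto simp: algebra_simps)
    next
      case 2 thus ?thesis using n i j unfolding T_def by (auto simp: algebra_simps)
    next
      case 3 thus ?thesis using n i j unfolding T_def by (auto simp: algebra_simps)
    next
      case 4 thus ?thesis using n i j unfolding T_def by (auto simp: algebra_simps)
    next
      case 5 thus ?thesis using n i j unfolding T_def by (auto simp: algebra_simps)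
    next
      case 6
      hence "j \<noteq> i - 1 \<or> i = 0" by auto
      thus ?thesis using 6 unfolding T_def by auto
    qed
  qed
  finally show ?thesis .
qed

lemma rowsum:
  fixes n :: nat and a b w q :: real
  assumes n: "n \<ge> 3" and i: "i < n"
  shows "(\<Sum>j<n. ((if j = i then w else 0) + (if j = i + 1 then a else 0)
     + (if j = n - 1 then (if i = 0 then a else 0) else 0)
     + (if j = i - 1 then (if i \<ge> 1 then b else 0) else 0)
     + (if j = 0 then (if i = n - 1 then b else 0) else 0)) * q ^ j)
   = w * q ^ i + (if i + 1 < n then a * q ^ (i + 1) else 0) + (if i = 0 then a * q ^ (n - 1) else 0)
     + (if i \<ge> 1 then b * q ^ (i - 1) else 0) + (if i = n - 1 then b else 0)"
  using n i by (simp add: distrib_right sum.distrib if_distrib[of "\<lambda>z. z * _"] sum.delta' cong: if_cong) arith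

lemma r_formula:
  fixes n :: nat and u v w t :: real
  assumes n: "n \<ge> 3" and uvw: "u > 0" "v > 0" "w > 0" and t: "0 \<le> t" "t \<le> 1"
  defines "A \<equiv> toep_mat n u v w"
  defines "a \<equiv> (1-t)*u + t*v" and "b \<equiv> (1-t)*v + t*u"
  defines "q \<equiv> (b / a) powr (1 / real n)"
  shows "real_spectral_radius ((1 - t) \<cdot>\<^sub>m A + t \<cdot>\<^sub>m transpose_mat A) = w + a * q + b / q"
proof -
  define M where "M = (1 - t) \<cdot>\<^sub>m A + t \<cdot>\<^sub>m transpose_mat A"
  define x where "x = vec n (\<lambda>j. q ^ j)"
  have a: "a > 0" unfolding a_def using uvw t pos_comb[of t u v] by simp
  have b: "b > 0" unfolding b_def using uvw t pos_comb[of t v u] by simp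
  have q: "q > 0" unfolding q_def using a b by simp
  have qn: "q ^ n = b / a"
  proof -
    have "q ^ n = q powr real n" using q by (simp add: powr_realpow)
    also have "\<dots> = (b / a) powr (1 / real n * real n)" unfolding q_def by (simp add: powr_powr)
    also have "\<dots> = b / a" using n a b by simp
    finally show ?thesis .
  qed
  have M: "M \<in> carrier_mat n n" unfolding M_def A_def toep_mat_def by simp
  have Mij: "M $$ (i,j) = (if j = i then w else 0) + (if j = i + 1 then a else 0)
     + (if j = n - 1 then (if i = 0 then a else 0) else 0)
     + (if j = i - 1 then (if i \<ge> 1 then b else 0) else 0)
     + (if j = 0 then (if i = n - 1 then b else 0) else 0)" if "i < n" "j < n" for i j
    unfolding M_def A_def a_def b_def using entries[OF n that] by simp
  have x: "x \<in> carrier_vec n" unfolding x_def by simp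
  show ?thesis unfolding M_def[symmetric]
  proof (rule perron_eig[OF M _ _ x])
    show "0 < n" using n by simp
    show "0 \<le> M $$ (i, j)" if "i < n" "j < n" for i j
      unfolding Mij[OF that] using a b uvw by simp
    show "0 < x $ i" if "i < n" for i unfolding x_def using that q by simp
    show "M *\<^sub>v x = (w + a * q + b / q) \<cdot>\<^sub>v x"
    proof (rule eq_vecI)
      show "dim_vec (M *\<^sub>v x) = dim_vec ((w + a * q + b / q) \<cdot>\<^sub>v x)" using M x by simp
      fix i assume "i < dim_vec ((w + a * q + b / q) \<cdot>\<^sub>v x)"
      hence i: "i < n" using x by simp
      have "(M *\<^sub>v x) $ i = (\<Sum>j<n. M $$ (i,j) * q ^ j)"
        using i M x unfolding x_def by (simp add: scalar_prod_def lessThan_atLeast0 row_def)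
      also have "\<dots> = (\<Sum>j<n. ((if j = i then w else 0) + (if j = i + 1 then a else 0)
     + (if j = n - 1 then (if i = 0 then a else 0) else 0)
     + (if j = i - 1 then (if i \<ge> 1 then b else 0) else 0)
     + (if j = 0 then (if i = n - 1 then b else 0) else 0)) * q ^ j)"
        using Mij[OF i] by (intro sum.cong) auto
      also have "\<dots> = w * q ^ i + (if i + 1 < n then a * q ^ (i + 1) else 0) + (if i = 0 then a * q ^ (n - 1) else 0)
     + (if i \<ge> 1 then b * q ^ (i - 1) else 0) + (if i = n - 1 then b else 0)"
        by (rule rowsum[OF n i])
      also have "\<dots> = (w + a * q + b / q) * q ^ i"
      proof -
        define m where "m = n - 3"
        have nm: "n = Suc (Suc (Suc m))" using n unfolding m_def by arith
        consider "i = 0" | "i = n - 1" | "0 < i \<and> i < n - 1" using i by linarith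
        thus ?thesis
        proof cases
          case 1
          have "a * q ^ (n - 1) * q = b" using qn a q nm by (simp add: field_simps)
          hence "a * q ^ (n - 1) = b / q" using q by (simp add: field_simps)
          thus ?thesis using 1 nm by simp
        next
          case 2
          have "a * q ^ n = b" using qn a by (simp add: field_simps)
          hence "a * (q * (q * (q * q ^ m))) = b" using nm by simp
          thus ?thesis using 2 nm q by (simp add: field_simps)
        next
          case 3
          then obtain k where k: "i = Suc k" by (metis gr0_implies_Suc)
          show ?thesis using 3 k q by (simp add: field_simps)
        qed
      qed
      also have "\<dots> = ((w + a * q + b / q) \<cdot>\<^sub>v x) $ i" using i unfolding x_def by simp
      finally show "(M *\<^sub>v x) $ i = ((w + a * q + b / q) \<cdot>\<^sub>v x) $ i" .
    qed
  qed
qed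

lemma aq_G:
  fixes a b p :: real
  assumes "a > 0" "b > 0"
  shows "a * (b / a) powr p = G (1 - p) a b" "b / (b / a) powr p = G p a b"
  using assms by (simp_all add: G_def powr_divide powr_diff field_simps)

lemma mem01:
  fixes l x y :: real
  assumes "x \<in> {0<..<1}" "y \<in> {0<..<1}" "0 < l" "l < 1"
  shows "l * x + (1 - l) * y \<in> {0<..<1}"
proof -
  have "l * x > 0" "(1 - l) * y > 0" using assms by auto
  hence "l * x + (1 - l) * y > 0" by linarith
  moreover have "l * x + (1 - l) * y < l * 1 + (1 - l) * 1" using assms
    by (intro add_strict_mono mult_strict_left_mono) auto
  ultimately show ?thesis by simp
qed

lemma rF_lemma:
  fixes n :: nat and u v w t :: real
  assumes "n \<ge> 3" "u > 0" "v > 0" "w > 0" "t \<in> {0<..<1}"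
  shows "real_spectral_radius ((1 - t) \<cdot>\<^sub>m toep_mat n u v w + t \<cdot>\<^sub>m transpose_mat (toep_mat n u v w))
    = w + G (1 - 1 / real n) ((1-t)*u + t*v) ((1-t)*v + t*u) + G (1 / real n) ((1-t)*u + t*v) ((1-t)*v + t*u)"
proof -
  have t: "0 \<le> t" "t \<le> 1" using assms(5) by auto
  have a: "(1-t)*u + t*v > 0" using pos_comb[OF t assms(2,3)] .
  have b: "(1-t)*v + t*u > 0" using pos_comb[OF t assms(3,2)] .
  show ?thesis using r_formula[OF assms(1-4) t] aq_G[OF a b] by simp
qed

lemma F_conc:
  fixes p u v w x y l :: real
  assumes p: "0 < p" "p < 1" and uv: "u > 0" "v > 0"
    and xy: "x \<in> {0<..<1}" "y \<in> {0<..<1}" and l: "0 < l" "l < 1"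
  defines "a \<equiv> \<lambda>t. (1-t)*u + t*v" and "b \<equiv> \<lambda>t. (1-t)*v + t*u"
  defines "F \<equiv> \<lambda>t. w + G (1 - p) (a t) (b t) + G p (a t) (b t)"
  shows "l * F x + (1 - l) * F y \<le> F (l * x + (1 - l) * y)"
    and "x \<noteq> y \<Longrightarrow> u \<noteq> v \<Longrightarrow> l * F x + (1 - l) * F y < F (l * x + (1 - l) * y)"
proof -
  have p1: "0 < 1 - p" "1 - p < 1" using p by auto
  have apos: "a t > 0" "b t > 0" if "t \<in> {0<..<1}" for t
    unfolding a_def b_def using that uv pos_comb[of t u v] pos_comb[of t v u] by auto
  have aff: "a (l * x + (1 - l) * y) = l * a x + (1 - l) * a y"
            "b (l * x + (1 - l) * y) = l * b x + (1 - l) * b y"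
    unfolding a_def b_def by (simp_all add: algebra_simps)
  have eq: "l * F x + (1 - l) * F y = w + (l * G (1 - p) (a x) (b x) + (1 - l) * G (1 - p) (a y) (b y))
       + (l * G p (a x) (b x) + (1 - l) * G p (a y) (b y))" unfolding F_def by (simp add: algebra_simps)
  have F2: "F (l * x + (1 - l) * y) = w + G (1 - p) (l * a x + (1 - l) * a y) (l * b x + (1 - l) * b y)
       + G p (l * a x + (1 - l) * a y) (l * b x + (1 - l) * b y)"
    unfolding F_def aff by simp
  note h1 = holder2(1)[OF p1 l apos(1)[OF xy(1)] apos(2)[OF xy(1)] apos(1)[OF xy(2)] apos(2)[OF xy(2)]]
  note h2 = holder2(1)[OF p l apos(1)[OF xy(1)] apos(2)[OF xy(1)] apos(1)[OF xy(2)] apos(2)[OF xy(2)]]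
  show "l * F x + (1 - l) * F y \<le> F (l * x + (1 - l) * y)"
    unfolding eq F2 using h1 h2 by linarith
  assume ne: "x \<noteq> y" "u \<noteq> v"
  have "a x * b y - a y * b x = (v - u) * (x - y) * (u + v)" unfolding a_def b_def
    by (simp add: algebra_simps)
  moreover have "(v - u) * (x - y) * (u + v) \<noteq> 0" using ne uv by simp
  ultimately have nd: "a x * b y \<noteq> a y * b x" by (metis diff_self)
  note h3 = holder2(2)[OF p1 l apos(1)[OF xy(1)] apos(2)[OF xy(1)] apos(1)[OF xy(2)] apos(2)[OF xy(2)] nd]
  show "l * F x + (1 - l) * F y < F (l * x + (1 - l) * y)"
    unfolding eq F2 using h3 h2 by linarith
qed

theorem theorem4:
  fixes n :: nat and u v w :: real
  assumes "n \<ge> 3" and "u > 0" and "v > 0" and "w > 0"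
  defines "A \<equiv> toep_mat n u v w"
  defines "r \<equiv> (\<lambda>t::real. real_spectral_radius ((1 - t) \<cdot>\<^sub>m A + t \<cdot>\<^sub>m transpose_mat A))"
  shows "concave_on {0<..<1} r \<and> (u \<noteq> v \<longrightarrow> strictly_concave_on {0<..<1} r)"
proof -
  define p where "p = 1 / real n"
  have p: "0 < p" "p < 1" unfolding p_def using assms(1) by auto
  define F where "F = (\<lambda>t. w + G (1 - p) ((1-t)*u + t*v) ((1-t)*v + t*u) + G p ((1-t)*u + t*v) ((1-t)*v + t*u))"
  have rF: "\<And>t. t \<in> {0<..<1} \<Longrightarrow> r t = F t"
    unfolding r_def A_def F_def p_def using rF_lemma[OF assms(1-4)] by simp
  have conc: "\<And>l x y. x \<in> {0<..<1} \<Longrightarrow> y \<in> {0<..<1} \<Longrightarrow> 0 < l \<Longrightarrow> l < 1 \<Longrightarrow>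
      l * r x + (1 - l) * r y \<le> r (l * x + (1 - l) * y)"
    using F_conc(1)[OF p assms(2,3)] rF mem01 unfolding F_def by simp
  have sconc: "\<And>l x y. x \<in> {0<..<1} \<Longrightarrow> y \<in> {0<..<1} \<Longrightarrow> 0 < l \<Longrightarrow> l < 1 \<Longrightarrow> x \<noteq> y \<Longrightarrow> u \<noteq> v \<Longrightarrow>
      l * r x + (1 - l) * r y < r (l * x + (1 - l) * y)"
    using F_conc(2)[OF p assms(2,3)] rF mem01 unfolding F_def by simp
  have cvx: "convex {0<..<(1::real)}" by (rule convex_real_interval)
  have c1: "concave_on {0<..<1} r"
    unfolding concave_on_def
  proof (rule convex_onI[OF _ cvx])
    fix s x y :: real
    assume "0 < s" "s < 1" "x \<in> {0<..<1}" "y \<in> {0<..<1}"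
    hence "(1 - s) * r x + (1 - (1 - s)) * r y \<le> r ((1 - s) * x + (1 - (1 - s)) * y)"
      by (intro conc) auto
    thus "- r ((1 - s) *\<^sub>R x + s *\<^sub>R y) \<le> (1 - s) * - r x + s * - r y" by simp
  qed
  have c2: "u \<noteq> v \<longrightarrow> strictly_concave_on {0<..<1} r"
    unfolding strictly_concave_on_def using cvx sconc by auto
  show ?thesis using c1 c2 by simp
qed

end
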